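(* Let $Q:\mathbb{R}\to\mathbb{C}$ be a bounded function ($Q\in L^\infty(\mathbb{R})$, evaluated pointwise) and let $(u(z))_{z\in\mathbb{Z}}\subset\mathbb{C}$ with $u(z)=0$ for all $z<0$ and $u(0)\neq0$. Let $R(\xi):=\sum_{z\in\mathbb{Z}}Q(\xi-z)u(z)$ and let $\gamma\{\ddot u_+\}$ be as in the context. Then $$Q(\xi)=\frac{1}{u(0)}\sum_{z\in\mathbb{Z}}R(\xi-z)\,\gamma\{\ddot u_+\}(z)\qquad(\xi\in\mathbb{R})$$ whenever one of the following holds: (1) there exists $\xi_0\in\mathbb{R}$ with $Q(\xi)=0$ for all $\xi<\xi_0$; (2) $Q$ is non-decreasing on $\mathbb{R}$, $\sum_{z\in\mathbb{Z}}|u(z)|<\infty$, and $\sum_{z\in\mathbb{Z}}|\gamma\{\ddot u_+\}(z)\,Q(\xi-z)|<\infty$ for each $\xi\in\mathbb{R}$.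
   Context: Define $\ddot u_+(z):=\delta_{z,0}-\frac{u(z)}{u(0)}$ for $z\in\mathbb{Z}$ (where $\delta_{z,0}=1$ if $z=0$, else $0$). Discrete convolution powers: $\ddot u_+^{*0}(z):=\delta_{z,0}$ and $\ddot u_+^{*j}(z):=\sum_{y\in\mathbb{Z}}\ddot u_+(z-y)\ddot u_+^{*(j-1)}(y)$ for $j\ge1$ (finite sums since $\ddot u_+$ vanishes on negative integers). Let $\gamma\{\ddot u_+\}(z):=\sum_{j=0}^{z}\ddot u_+^{*j}(z)$ for $z\in\mathbb{Z}$ (empty sum $=0$, so $\gamma\{\ddot u_+\}(z)=0$ for $z<0$). *)

theory Defs
  imports "HOL-Analysis.Analysis"
begin

definition uddot :: "(int \<Rightarrow> complex) \<Rightarrow> int \<Rightarrow> complex" where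
  "uddot u z = (if z = 0 then 1 else 0) - u z / u 0"

fun conv_pow :: "(int \<Rightarrow> complex) \<Rightarrow> nat \<Rightarrow> int \<Rightarrow> complex" where
  "conv_pow f 0 z = (if z = 0 then 1 else 0)"
| "conv_pow f (Suc j) z = (\<Sum>\<^sub>\<infinity>y\<in>(UNIV::int set). f (z - y) * conv_pow f j y)"

definition gam :: "(int \<Rightarrow> complex) \<Rightarrow> int \<Rightarrow> complex" where
  "gam f z = (if z < 0 then 0 else (\<Sum>j\<in>{0..nat z}. conv_pow f j z))"

definition Rfun :: "(real \<Rightarrow> complex) \<Rightarrow> (int \<Rightarrow> complex) \<Rightarrow> real \<Rightarrow> complex" where
  "Rfun Q u \<xi> = (\<Sum>\<^sub>\<infinity>z\<in>(UNIV::int set). Q (\<xi> - of_int z) * u z)"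

end

theory Submission
  imports Defs
begin

lemma uddot_nonpos: assumes "\<forall>z<0. u z = 0" "u 0 \<noteq> 0" "z \<le> 0"
  shows "uddot u z = 0"
  using assms by (cases "z = 0") (auto simp: uddot_def)

lemma cp_zero: assumes "\<And>z. z \<le> 0 \<Longrightarrow> f z = 0"
  shows "y < int j \<Longrightarrow> conv_pow f j y = 0"
proof (induction j arbitrary: y)
  case 0 then show ?case by simp
next
  case (Suc j)
  have "conv_pow f (Suc j) y = (\<Sum>\<^sub>\<infinity>x\<in>(UNIV::int set). f (y - x) * conv_pow f j x)" by simp
  also have "\<dots> = 0"
  proof (rule infsum_0)
    fix x :: int
    show "f (y - x) * conv_pow f j x = 0"
    proof (cases "x < int j")
      case True then show ?thesis using Suc.IH by simp
    next
      case False then show ?thesis using Suc.prems assms[of "y-x"] by simp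
    qed
  qed
  finally show ?case .
qed

lemma cp_suc: assumes "\<And>z. z \<le> 0 \<Longrightarrow> f z = 0"
  shows "conv_pow f (Suc j) z = (\<Sum>y\<in>{0..z}. f (z - y) * conv_pow f j y)"
proof -
  have "conv_pow f (Suc j) z = (\<Sum>\<^sub>\<infinity>y\<in>(UNIV::int set). f (z - y) * conv_pow f j y)" by simp
  also have "\<dots> = (\<Sum>\<^sub>\<infinity>y\<in>{0..z}. f (z - y) * conv_pow f j y)"
  proof (rule infsum_cong_neutral)
    fix y assume "y \<in> UNIV - {0..z}"
    then have "y < 0 \<or> y > z" by auto
    then show "f (z - y) * conv_pow f j y = 0"
      using cp_zero[OF assms, where y=y and j=j] assms[of "z-y"] by auto
  qed auto
  finally show ?thesis by simp
qed

lemma gam_N: assumes "\<And>z. z \<le> 0 \<Longrightarrow> f z = 0" "z \<le> int N"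
  shows "gam f z = (\<Sum>j\<le>N. conv_pow f j z)"
proof (cases "z < 0")
  case True
  then show ?thesis using cp_zero[OF assms(1), where y=z] by (simp add: gam_def)
next
  case False
  then have "{0..nat z} \<subseteq> {..N}" using assms(2) by auto
  then have "(\<Sum>j\<le>N. conv_pow f j z) = (\<Sum>j\<in>{0..nat z}. conv_pow f j z)"
    by (intro sum.mono_neutral_right) (auto intro!: cp_zero[OF assms(1)])
  then show ?thesis using False by (simp add: gam_def)
qed

lemma conv_id:
  assumes un: "\<forall>z<0. u z = 0" and u0: "u 0 \<noteq> 0"
  shows "(\<Sum>\<^sub>\<infinity>z\<in>(UNIV::int set). u (w - z) * gam (uddot u) z) = (if w = 0 then u 0 else 0)"
proof -
  let ?f = "uddot u"
  have f0: "\<And>z. z \<le> 0 \<Longrightarrow> ?f z = 0" using uddot_nonpos[OF un u0] .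
  have g0: "\<And>z. z < 0 \<Longrightarrow> gam ?f z = 0" by (simp add: gam_def)
  have "(\<Sum>\<^sub>\<infinity>z\<in>(UNIV::int set). u (w - z) * gam ?f z) = (\<Sum>\<^sub>\<infinity>z\<in>{0..w}. u (w - z) * gam ?f z)"
  proof (rule infsum_cong_neutral)
    fix y assume "y \<in> UNIV - {0..w}"
    then have "y < 0 \<or> y > w" by auto
    then show "u (w - y) * gam ?f y = 0" using g0 un by auto
  qed auto
  also have "\<dots> = (\<Sum>z\<in>{0..w}. u (w - z) * gam ?f z)" by simp
  finally have e1: "(\<Sum>\<^sub>\<infinity>z\<in>(UNIV::int set). u (w - z) * gam ?f z) = (\<Sum>z\<in>{0..w}. u (w - z) * gam ?f z)" .
  show ?thesis
  proof (cases "w < 0")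
    case True then show ?thesis using e1 by simp
  next
    case False
    define N where "N = nat w"
    have uw: "u x = u 0 * ((if x = 0 then 1 else 0) - ?f x)" for x
      using u0 by (simp add: uddot_def field_simps)
    have "(\<Sum>z\<in>{0..w}. u (w - z) * gam ?f z)
       = u 0 * ((\<Sum>z\<in>{0..w}. (if w - z = 0 then 1 else 0) * gam ?f z) - (\<Sum>z\<in>{0..w}. ?f (w - z) * gam ?f z))"
      by (subst uw) (simp add: sum_distrib_left algebra_simps sum_subtractf)
    also have "(\<Sum>z\<in>{0..w}. (if w - z = 0 then 1 else 0) * gam ?f z) = gam ?f w"
    proof -
      have "(\<Sum>z\<in>{0..w}. (if w - z = 0 then 1 else 0) * gam ?f z) = (\<Sum>z\<in>{0..w}. if z = w then gam ?f z else 0)"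
        by (intro sum.cong) auto
      also have "\<dots> = gam ?f w" using False by (simp add: sum.delta')
      finally show ?thesis .
    qed
    also have "(\<Sum>z\<in>{0..w}. ?f (w - z) * gam ?f z) = (\<Sum>j\<le>N. conv_pow ?f (Suc j) w)"
    proof -
      have "(\<Sum>z\<in>{0..w}. ?f (w - z) * gam ?f z) = (\<Sum>z\<in>{0..w}. ?f (w - z) * (\<Sum>j\<le>N. conv_pow ?f j z))"
        proof (intro sum.cong refl)
          fix x assume "x \<in> {0..w}"
          then have "x \<le> int N" by (simp add: N_def)
          then show "?f (w - x) * gam ?f x = ?f (w - x) * (\<Sum>j\<le>N. conv_pow ?f j x)"
            using gam_N[where f="?f", OF f0] by simp
        qed
      also have "\<dots> = (\<Sum>j\<le>N. \<Sum>z\<in>{0..w}. ?f (w - z) * conv_pow ?f j z)"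
        by (simp add: sum_distrib_left sum.swap[of _ "{0..w}"])
      also have "\<dots> = (\<Sum>j\<le>N. conv_pow ?f (Suc j) w)"
        by (simp del: conv_pow.simps add: cp_suc[OF f0])
      finally show ?thesis .
    qed
    also have "gam ?f w = conv_pow ?f 0 w + (\<Sum>j\<le>N. conv_pow ?f (Suc j) w)"
      proof -
      have "w \<le> int (Suc N)" by (simp add: N_def)
      from gam_N[where f="?f", OF f0 this] have "gam ?f w = (\<Sum>j\<le>Suc N. conv_pow ?f j w)" .
      then show ?thesis by (simp only: sum.atMost_Suc_shift)
    qed
    finally show ?thesis using e1 by simp
  qed
qed


lemma main_sum:
  fixes Q :: "real \<Rightarrow> complex" and u :: "int \<Rightarrow> complex"
  assumes un: "\<forall>z<0. u z = 0" and u0: "u 0 \<noteq> 0"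
    and summ: "(\<lambda>(z,z'). Q (\<xi> - of_int z - of_int z') * u z' * gam (uddot u) z) summable_on (UNIV::(int\<times>int) set)"
  shows "Q \<xi> = (1 / u 0) * (\<Sum>\<^sub>\<infinity>z\<in>(UNIV::int set). Rfun Q u (\<xi> - of_int z) * gam (uddot u) z)"
proof -
  let ?g = "gam (uddot u)"
  define F where "F = (\<lambda>z z'. Q (\<xi> - of_int z - of_int z') * u z' * ?g z)"
  define G where "G = (\<lambda>w z. Q (\<xi> - of_int w) * (u (w - z) * ?g z))"
  have sF: "(\<lambda>(z,z'). F z z') summable_on (Sigma UNIV (\<lambda>_. UNIV))"
    using summ by (simp add: F_def)
  have re: "(\<lambda>(w,z). G w z) (case p of (z, z') \<Rightarrow> (z + z', z)) = (\<lambda>(z,z'). F z z') p" for p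
    by (cases p) (simp add: F_def G_def algebra_simps)
  have eqs: "((\<lambda>(z,z'). F z z') summable_on (UNIV::(int\<times>int) set)) = ((\<lambda>(w,z). G w z) summable_on (UNIV::(int\<times>int) set))"
   "infsum (\<lambda>(z,z'). F z z') (UNIV::(int\<times>int) set) = infsum (\<lambda>(w,z). G w z) (UNIV::(int\<times>int) set)"
    by (rule summable_on_reindex_bij_witness[where i="\<lambda>(w,z). (z, w - z)" and j="\<lambda>(z,z'). (z+z', z)"],
        auto simp: re split: prod.splits,
        rule infsum_reindex_bij_witness[where i="\<lambda>(w,z). (z, w - z)" and j="\<lambda>(z,z'). (z+z', z)"],
        auto simp: re split: prod.splits)
  have sG: "(\<lambda>(w,z). G w z) summable_on (Sigma UNIV (\<lambda>_. UNIV))"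
    using sF eqs(1) by simp
  have "(\<Sum>\<^sub>\<infinity>z\<in>(UNIV::int set). Rfun Q u (\<xi> - of_int z) * ?g z)
      = (\<Sum>\<^sub>\<infinity>z\<in>(UNIV::int set). \<Sum>\<^sub>\<infinity>z'\<in>(UNIV::int set). F z z')"
    by (simp add: Rfun_def F_def infsum_cmult_left')
  also have "\<dots> = infsum (\<lambda>(z,z'). F z z') (UNIV::(int\<times>int) set)"
    using infsum_Sigma'_banach[OF sF] by simp
  also have "\<dots> = infsum (\<lambda>(w,z). G w z) (UNIV::(int\<times>int) set)" by (rule eqs(2))
  also have "\<dots> = (\<Sum>\<^sub>\<infinity>w\<in>(UNIV::int set). \<Sum>\<^sub>\<infinity>z\<in>(UNIV::int set). G w z)"
    using infsum_Sigma'_banach[OF sG] by simp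
  also have "\<dots> = (\<Sum>\<^sub>\<infinity>w\<in>(UNIV::int set). Q (\<xi> - of_int w) * (if w = 0 then u 0 else 0))"
    unfolding G_def by (simp add: infsum_cmult_right' conv_id[OF un u0])
  also have "\<dots> = (\<Sum>\<^sub>\<infinity>w\<in>{0::int}. Q (\<xi> - of_int w) * (if w = 0 then u 0 else 0))"
    by (rule infsum_cong_neutral) auto
  also have "\<dots> = Q \<xi> * u 0" by simp
  finally show ?thesis using u0 by simp
qed


lemma norm_case_prod_helper: "norm ((\<lambda>(z,z'). f z z') p) = (\<lambda>(z,z'). norm (f z z')) p"
  by (cases p) simp

lemma prod_summable:
  fixes a b :: "int \<Rightarrow> real"
  assumes "a summable_on UNIV" "b summable_on UNIV" "\<And>z. a z \<ge> 0" "\<And>z. b z \<ge> 0"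
  shows "(\<lambda>(z,z'). a z * b z') summable_on (UNIV::(int\<times>int) set)"
proof -
  have "(\<lambda>p. a (fst p) * b (snd p)) summable_on Sigma UNIV (\<lambda>_. UNIV)"
  proof (rule summable_on_SigmaI[where g="\<lambda>x. a x * infsum b UNIV"])
    fix x :: int
    show "((\<lambda>y. a (fst (x, y)) * b (snd (x, y))) has_sum a x * infsum b UNIV) UNIV"
      using has_sum_cmult_right[OF has_sum_infsum[OF assms(2)]] by simp
  next
    show "(\<lambda>x. a x * infsum b UNIV) summable_on UNIV"
      using summable_on_cmult_left[OF assms(1)] by simp
  qed (use assms in auto)
  then show ?thesis by (simp add: case_prod_beta')
qed

lemma case1_summable:
  fixes Q :: "real \<Rightarrow> complex" and u :: "int \<Rightarrow> complex"
  assumes un: "\<forall>z<0. u z = 0" and xi0: "\<forall>\<xi><\<xi>0. Q \<xi> = 0"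
  shows "(\<lambda>(z,z'). Q (\<xi> - of_int z - of_int z') * u z' * gam (uddot u) z) summable_on (UNIV::(int\<times>int) set)"
proof -
  define M where "M = \<lceil>\<xi> - \<xi>0\<rceil>"
  have "(\<lambda>(z,z'). Q (\<xi> - of_int z - of_int z') * u z' * gam (uddot u) z) summable_on ({0..M}\<times>{0..M})"
    by simp
  moreover have "((\<lambda>(z,z'). Q (\<xi> - of_int z - of_int z') * u z' * gam (uddot u) z) summable_on UNIV)
     = ((\<lambda>(z,z'). Q (\<xi> - of_int z - of_int z') * u z' * gam (uddot u) z) summable_on ({0..M}\<times>{0..M}))"
  proof (rule summable_on_cong_neutral)
    fix p :: "int \<times> int" assume "p \<in> UNIV - {0..M}\<times>{0..M}"
    then obtain z z' where p: "p = (z,z')" and nz: "\<not> (0 \<le> z \<and> z \<le> M \<and> 0 \<le> z' \<and> z' \<le> M)"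
      by (cases p) auto
    show "(case p of (z,z') \<Rightarrow> Q (\<xi> - of_int z - of_int z') * u z' * gam (uddot u) z) = 0"
    proof (cases "z < 0 \<or> z' < 0")
      case True then show ?thesis using un p by (auto simp: gam_def)
    next
      case False
      then have "z > M \<or> z' > M" using nz by auto
      then have "\<xi> - of_int z - of_int z' < \<xi>0" using False unfolding M_def
        by (smt (verit, ccfv_threshold) le_of_int_ceiling of_int_less_iff of_int_le_iff of_int_0_le_iff)
      then show ?thesis using xi0 p by simp
    qed
  qed auto
  ultimately show ?thesis by simp
qed


lemma case2_summable:
  fixes Q :: "real \<Rightarrow> complex" and u :: "int \<Rightarrow> complex"
  assumes Qbdd: "bounded (range Q)" and un: "\<forall>z<0. u z = 0"
    and real: "\<forall>x. Q x \<in> \<real>" and mo: "mono (\<lambda>x. Re (Q x))"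
    and su: "(\<lambda>z. norm (u z)) summable_on (UNIV::int set)"
    and sg: "\<forall>\<xi>. (\<lambda>z. norm (gam (uddot u) z * Q (\<xi> - of_int z))) summable_on (UNIV::int set)"
  shows "(\<lambda>(z,z'). Q (\<xi> - of_int z - of_int z') * u z' * gam (uddot u) z) summable_on (UNIV::(int\<times>int) set)"
proof -
  let ?g = "gam (uddot u)"
  have g0: "\<And>z. z < 0 \<Longrightarrow> ?g z = 0" by (simp add: gam_def)
  have nQ: "norm (Q x) = \<bar>Re (Q x)\<bar>" for x
    using real by (metis Reals_cases Re_complex_of_real norm_of_real)
  obtain a where asum: "a summable_on UNIV" and anon: "\<And>z. a z \<ge> 0"
    and abnd: "\<And>z z'. norm (Q (\<xi> - of_int z - of_int z') * u z' * ?g z) \<le> a z * norm (u z')"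
  proof (cases "\<forall>x. Re (Q x) \<ge> 0")
    case True
    show ?thesis
    proof (rule that[of "\<lambda>z. norm (?g z * Q (\<xi> - of_int z))"])
      show "(\<lambda>z. norm (?g z * Q (\<xi> - of_int z))) summable_on UNIV" using sg by simp
      fix z z' :: int
      show "norm (Q (\<xi> - of_int z - of_int z') * u z' * ?g z) \<le> norm (?g z * Q (\<xi> - of_int z)) * norm (u z')"
      proof (cases "z' < 0")
        case True then show ?thesis using un by simp
      next
        case False
        then have "Re (Q (\<xi> - of_int z - of_int z')) \<le> Re (Q (\<xi> - of_int z))"
          using mo by (intro monoD[OF mo]) simp
        then have "norm (Q (\<xi> - of_int z - of_int z')) \<le> norm (Q (\<xi> - of_int z))"
          using True nQ by (metis abs_of_nonneg)
        then show ?thesis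
          by (simp add: norm_mult mult_right_mono mult_left_mono algebra_simps)
      qed
    qed simp
  next
    case False
    then obtain x0 where x0: "Re (Q x0) < 0" by (auto simp: not_le)
    define c where "c = - Re (Q x0)"
    have c: "c > 0" using x0 by (simp add: c_def)
    obtain B where B: "\<And>x. norm (Q x) \<le> B" using Qbdd by (auto simp: bounded_iff)
    define A1 where "A1 = {z::int. \<xi> - of_int z \<le> x0}"
    have low: "norm (Q x) \<ge> c" if "x \<le> x0" for x
    proof -
      have "Re (Q x) \<le> Re (Q x0)" using monoD[OF mo that] .
      then show ?thesis using nQ[of x] by (simp add: c_def)
    qed
    have s1: "(\<lambda>z. norm (?g z)) summable_on A1"
    proof (rule summable_on_comparison_test)
      have "(\<lambda>z. norm (?g z * Q (\<xi> - of_int z))) summable_on A1"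
        using sg summable_on_subset[of _ UNIV A1] by blast
      from summable_on_cmult_left[OF this, of "1/c"]
      show "(\<lambda>z. norm (?g z * Q (\<xi> - of_int z)) / c) summable_on A1" by simp
      fix z assume "z \<in> A1"
      then have "norm (Q (\<xi> - of_int z)) \<ge> c" using low by (simp add: A1_def)
      then have "norm (?g z) * c \<le> norm (?g z * Q (\<xi> - of_int z))"
        by (simp add: norm_mult mult_left_mono)
      then show "norm (?g z) \<le> norm (?g z * Q (\<xi> - of_int z)) / c"
        using c by (simp add: pos_le_divide_eq)
    qed simp
    define M where "M = \<lceil>\<xi> - x0\<rceil>"
    have s2: "(\<lambda>z. norm (?g z)) summable_on (UNIV - A1)"
    proof -
      have "(\<lambda>z. norm (?g z)) summable_on ({0..M} - A1)" by simp
      moreover have "((\<lambda>z. norm (?g z)) summable_on (UNIV - A1)) = ((\<lambda>z. norm (?g z)) summable_on ({0..M} - A1))"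
      proof (rule summable_on_cong_neutral)
        fix z assume "z \<in> (UNIV - A1) - ({0..M} - A1)"
        then have "z < 0" unfolding A1_def M_def by (auto simp: not_le) (smt (verit) le_of_int_ceiling of_int_le_iff)
        then show "norm (?g z) = 0" using g0 by simp
      qed auto
      ultimately show ?thesis by simp
    qed
    have sgn: "(\<lambda>z. norm (?g z)) summable_on UNIV"
      using summable_on_Un_disjoint[OF s1 s2] by (simp add: Un_Diff_cancel)
    have B0: "B \<ge> 0" using B[of 0] norm_ge_zero order_trans by blast
    show ?thesis
    proof (rule that[of "\<lambda>z. B * norm (?g z)"])
      show "(\<lambda>z. B * norm (?g z)) summable_on UNIV" using summable_on_cmult_right[OF sgn] by simp
      fix z z' :: int
      show "norm (Q (\<xi> - of_int z - of_int z') * u z' * ?g z) \<le> B * norm (?g z) * norm (u z')"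
      proof -
        have "norm (Q (\<xi> - of_int z - of_int z')) * (norm (u z') * norm (?g z)) \<le> B * (norm (u z') * norm (?g z))"
          using B[of "\<xi> - of_int z - of_int z'"] by (intro mult_right_mono) auto
        moreover have "norm (Q (\<xi> - of_int z - of_int z') * u z' * ?g z) = norm (Q (\<xi> - of_int z - of_int z')) * (norm (u z') * norm (?g z))"
          by (simp add: norm_mult mult.assoc)
        moreover have "B * norm (?g z) * norm (u z') = B * (norm (u z') * norm (?g z))" by (simp add: mult.commute mult.left_commute)
        ultimately show ?thesis by linarith
      qed
    qed (use B0 in simp)
  qed
  have "(\<lambda>(z,z'). a z * norm (u z')) summable_on (UNIV::(int\<times>int) set)"
    by (rule prod_summable[OF asum su anon]) simp
  then have "(\<lambda>(z,z'). norm (Q (\<xi> - of_int z - of_int z') * u z' * ?g z)) summable_on (UNIV::(int\<times>int) set)"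
  proof (rule summable_on_comparison_test)
    fix p :: "int \<times> int"
    obtain z z' where p: "p = (z,z')" by (cases p)
    show "(case p of (z,z') \<Rightarrow> norm (Q (\<xi> - of_int z - of_int z') * u z' * ?g z)) \<le> (case p of (z,z') \<Rightarrow> a z * norm (u z'))"
      using abnd[of z z'] p by simp
    show "0 \<le> (case p of (z,z') \<Rightarrow> norm (Q (\<xi> - of_int z - of_int z') * u z' * ?g z))"
      using p by simp
  qed
  then have "(\<lambda>p. norm ((\<lambda>(z,z'). Q (\<xi> - of_int z - of_int z') * u z' * ?g z) p)) summable_on (UNIV::(int\<times>int) set)"
    by (simp only: case_prod_beta' norm_case_prod_helper)
  then show ?thesis
    by (rule abs_summable_summable)
qed

theorem theorem2:
  fixes Q :: "real \<Rightarrow> complex" and u :: "int \<Rightarrow> complex"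
  assumes Qbdd: "bounded (range Q)"
    and u_neg: "\<forall>z<0. u z = 0"
    and u0: "u 0 \<noteq> 0"
    and cases: "(\<exists>\<xi>0. \<forall>\<xi><\<xi>0. Q \<xi> = 0)
      \<or> ((\<forall>x. Q x \<in> \<real>) \<and> mono (\<lambda>x. Re (Q x))
         \<and> (\<lambda>z. norm (u z)) summable_on (UNIV::int set)
         \<and> (\<forall>\<xi>. (\<lambda>z. norm (gam (uddot u) z * Q (\<xi> - of_int z))) summable_on (UNIV::int set)))"
  shows "\<forall>\<xi>. Q \<xi> = (1 / u 0) * (\<Sum>\<^sub>\<infinity>z\<in>(UNIV::int set). Rfun Q u (\<xi> - of_int z) * gam (uddot u) z)"
proof
  fix \<xi> :: real
  have "(\<lambda>(z,z'). Q (\<xi> - of_int z - of_int z') * u z' * gam (uddot u) z) summable_on (UNIV::(int\<times>int) set)"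
    using cases
  proof
    assume "\<exists>\<xi>0. \<forall>\<xi><\<xi>0. Q \<xi> = 0"
    then obtain \<xi>0 where "\<forall>\<xi><\<xi>0. Q \<xi> = 0" by blast
    then show ?thesis using case1_summable[OF u_neg] by blast
  next
    assume h: "(\<forall>x. Q x \<in> \<real>) \<and> mono (\<lambda>x. Re (Q x))
         \<and> (\<lambda>z. norm (u z)) summable_on (UNIV::int set)
         \<and> (\<forall>\<xi>. (\<lambda>z. norm (gam (uddot u) z * Q (\<xi> - of_int z))) summable_on (UNIV::int set))"
    show ?thesis using case2_summable[OF Qbdd u_neg] h by blast
  qed
  then show "Q \<xi> = (1 / u 0) * (\<Sum>\<^sub>\<infinity>z\<in>(UNIV::int set). Rfun Q u (\<xi> - of_int z) * gam (uddot u) z)"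
    by (rule main_sum[OF u_neg u0])
qed

end
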